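(* Let $N\ge 2$, $\lambda\ne0$, and for $x,p\in\mathbb{C}^N$ set $$L_k(x,p;\lambda)=\begin{pmatrix}\lambda(e^{2p_k}+1)+x_k(e^{2p_k}-1) & (\lambda^2-x_k^2)(e^{2p_k}-1)\\ e^{2p_k}-1 & \lambda(e^{2p_k}+1)-x_k(e^{2p_k}-1)\end{pmatrix},\qquad T_N(x,p;\lambda)=L_N(x,p;\lambda)\cdots L_1(x,p;\lambda).$$ (a) Periodic case: if $\widetilde{x}\in\mathbb{C}^N$ satisfies $e^{2p_k}=\frac{\widetilde{x}_k-x_k+\lambda}{\widetilde{x}_k-x_k-\lambda}\cdot\frac{x_k-\widetilde{x}_{k-1}+\lambda}{x_k-\widetilde{x}_{k-1}-\lambda}$ for $k=1,\dots,N$ with $\widetilde x_0=\widetilde x_N$, $x_{N+1}=x_1$, then $$(2\lambda)^N\frac{\prod_{k=1}^N(\widetilde{x}_k-x_{k+1}-\lambda)}{\prod_{k=1}^N(\widetilde{x}_k-x_k-\lambda)}$$ is an eigenvalue of $T_N(x,p;\lambda)$. (b) Open-end case: if $e^{2p_1}=\frac{\widetilde{x}_1-x_1+\lambda}{\widetilde{x}_1-x_1-\lambda}$ and the relation in (a) holds for $k=2,\dots,N$, then the $(2,1)$-entry of $T_N(x,p;\lambda)$ equals $$(2\lambda)^N\frac{\prod_{k=1}^{N-1}(\widetilde{x}_k-x_{k+1}-\lambda)}{\prod_{k=1}^N(\widetilde{x}_k-x_k-\lambda)}.$$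
   Context: The relation between $(x,p)$ and $\widetilde x$ is the first half of the Bäcklund transformation $F_\lambda$ of the symmetric rational multiplicative Toda-type system $\ddot x_k=-(\dot x_k^2-1)\big(\frac{1}{x_{k+1}-x_k}-\frac{1}{x_k-x_{k-1}}\big)$. *)

theory Defs
  imports "HOL-Analysis.Analysis"
begin

text \<open>Lax matrix L_k(x,p;lambda); vectors x, p are functions indexed by 1..N.
  Row/column index 1 :: 2 is the first, 2 :: 2 the second.\<close>
definition Lmat :: "(nat \<Rightarrow> complex) \<Rightarrow> (nat \<Rightarrow> complex) \<Rightarrow> complex \<Rightarrow> nat \<Rightarrow> complex^2^2" where
  "Lmat x p lam k = (let E = exp (2 * p k) in
     (\<chi> i j. if i = 1 then (if j = 1 then lam * (E + 1) + x k * (E - 1)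
                                   else (lam^2 - (x k)^2) * (E - 1))
             else (if j = 1 then E - 1 else lam * (E + 1) - x k * (E - 1))))"

fun Tmat :: "(nat \<Rightarrow> complex) \<Rightarrow> (nat \<Rightarrow> complex) \<Rightarrow> complex \<Rightarrow> nat \<Rightarrow> complex^2^2" where
  "Tmat x p lam 0 = mat 1"
| "Tmat x p lam (Suc n) = Lmat x p lam (Suc n) ** Tmat x p lam n"

definition is_eigenvalue :: "complex^2^2 \<Rightarrow> complex \<Rightarrow> bool" where
  "is_eigenvalue A mu \<longleftrightarrow> (\<exists>v. v \<noteq> 0 \<and> A *v v = mu *s v)"

end

theory Submission
  imports Defs
begin

lemma alg:
  fixes E c X Y T l :: complex
  assumes "T - X - l \<noteq> 0" "X - Y - l \<noteq> 0"
    "E * ((T - X - l) * (X - Y - l)) = (T - X + l) * (X - Y + l)"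
    "c * (T - X - l) = 2 * l * (Y - X - l)"
  shows "(l*(E+1)+X*(E-1))*Y + (l^2-X^2)*(E-1) = c*T"
    "(E-1)*Y + (l*(E+1) - X*(E-1)) = c"
  using assms by algebra+

lemma alg1:
  fixes E c X T l :: complex
  assumes "T - X - l \<noteq> 0"
    "E * (T - X - l) = (T - X + l)"
    "c * (T - X - l) = 2 * l"
  shows "(l*(E+1)+X*(E-1)) = c*T"
    "(E-1) = c"
  using assms by algebra+

definition W :: "complex \<Rightarrow> complex^2" where
  "W t = (\<chi> i. if i = 1 then t else 1)"

lemma W_nz: "W t \<noteq> 0"
proof
  assume "W t = 0" then have "W t $ 2 = 0" by simp
  then show False by (simp add: W_def)
qed

lemma step:
  assumes a: "xt - x k - lam \<noteq> 0" and b: "x k - y - lam \<noteq> 0"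
    and E: "exp (2 * p k) = (xt - x k + lam) / (xt - x k - lam) * ((x k - y + lam) / (x k - y - lam))"
  shows "Lmat x p lam k *v W y = (2 * lam * (y - x k - lam) / (xt - x k - lam)) *s W xt"
proof -
  define c where "c = 2 * lam * (y - x k - lam) / (xt - x k - lam)"
  have hc: "c * (xt - x k - lam) = 2 * lam * (y - x k - lam)" using a unfolding c_def by simp
  have hE: "exp (2 * p k) * ((xt - x k - lam) * (x k - y - lam)) = (xt - x k + lam) * (x k - y + lam)"
    using a b unfolding E by simp
  note A = alg[OF a b hE hc]
  show ?thesis unfolding c_def[symmetric]
    unfolding vec_eq_iff forall_2 matrix_vector_mult_def Lmat_def Let_def W_def
    using A by (simp add: sum_2 algebra_simps)
qed

lemma step1:
  assumes a: "xt - x k - lam \<noteq> 0"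
    and E: "exp (2 * p k) = (xt - x k + lam) / (xt - x k - lam)"
  shows "Lmat x p lam k *v axis 1 1 = (2 * lam / (xt - x k - lam)) *s W xt"
proof -
  define c where "c = 2 * lam / (xt - x k - lam)"
  have hc: "c * (xt - x k - lam) = 2 * lam" using a unfolding c_def by simp
  have hE: "exp (2 * p k) * (xt - x k - lam) = (xt - x k + lam)"
    using a unfolding E by simp
  note A = alg1[OF a hE hc]
  show ?thesis unfolding c_def[symmetric]
    unfolding vec_eq_iff forall_2 matrix_vector_mult_def Lmat_def Let_def W_def axis_def
    using A by (simp add: sum_2 algebra_simps)
qed

lemma mv_scale: "(A::complex^2^2) *v (c *s v) = c *s (A *v v)"
  by (simp add: vec_eq_iff matrix_vector_mult_def sum_distrib_left algebra_simps)

lemma partA: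
  fixes N :: nat and lam :: complex and x p xt :: "nat \<Rightarrow> complex"
  assumes H: "\<forall>k\<in>{1..N}. xt k - x k - lam \<noteq> 0 \<and>
        x k - (if k = 1 then xt N else xt (k - 1)) - lam \<noteq> 0 \<and>
        exp (2 * p k) =
          (xt k - x k + lam) / (xt k - x k - lam) *
          ((x k - (if k = 1 then xt N else xt (k - 1)) + lam) /
           (x k - (if k = 1 then xt N else xt (k - 1)) - lam))"
  shows "n \<le> N \<Longrightarrow> Tmat x p lam n *v W (xt N) =
     (\<Prod>k=1..n. 2 * lam * ((if k = 1 then xt N else xt (k - 1)) - x k - lam) / (xt k - x k - lam))
       *s W (if n = 0 then xt N else xt n)"
proof (induction n)
  case 0 then show ?case by simp
next
  case (Suc n)
  then have IH: "Tmat x p lam n *v W (xt N) =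
     (\<Prod>k=1..n. 2 * lam * ((if k = 1 then xt N else xt (k - 1)) - x k - lam) / (xt k - x k - lam))
       *s W (if n = 0 then xt N else xt n)" by simp
  have hk: "Suc n \<in> {1..N}" using Suc.prems by simp
  have yy: "(if Suc n = 1 then xt N else xt (Suc n - 1)) = (if n = 0 then xt N else xt n)" by simp
  have S: "Lmat x p lam (Suc n) *v W (if n = 0 then xt N else xt n) =
     (2 * lam * ((if Suc n = 1 then xt N else xt (Suc n - 1)) - x (Suc n) - lam) / (xt (Suc n) - x (Suc n) - lam)) *s W (xt (Suc n))"
    unfolding yy[symmetric]
    apply (rule step)
    using H hk by blast+
  show ?case
    by (simp only: Tmat.simps matrix_vector_mul_assoc[symmetric] IH mv_scale S vector_smult_assoc)
       (simp add: prod.nat_ivl_Suc' mult.commute)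
qed

lemma partB:
  fixes N :: nat and lam :: complex and x p xt :: "nat \<Rightarrow> complex"
  assumes H1: "xt 1 - x 1 - lam \<noteq> 0"
      "exp (2 * p 1) = (xt 1 - x 1 + lam) / (xt 1 - x 1 - lam)"
    and H: "\<forall>k\<in>{2..N}. xt k - x k - lam \<noteq> 0 \<and> x k - xt (k - 1) - lam \<noteq> 0 \<and>
        exp (2 * p k) =
          (xt k - x k + lam) / (xt k - x k - lam) *
          ((x k - xt (k - 1) + lam) / (x k - xt (k - 1) - lam))"
  shows "1 \<le> n \<Longrightarrow> n \<le> N \<Longrightarrow> Tmat x p lam n *v axis 1 1 =
     (\<Prod>k=1..n. 2 * lam * (if k = 1 then 1 else xt (k - 1) - x k - lam) / (xt k - x k - lam))
       *s W (xt n)"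
proof (induction n)
  case 0 then show ?case by simp
next
  case (Suc n)
  show ?case
  proof (cases "n = 0")
    case True
    have "Lmat x p lam 1 *v axis 1 1 = (2 * lam / (xt 1 - x 1 - lam)) *s W (xt 1)"
      using step1[where x=x and k=1 and xt="xt 1" and lam=lam and p=p] H1 by blast
    then show ?thesis using True
      by (simp add: matrix_vector_mul_assoc[symmetric])
  next
    case False
    then have IH: "Tmat x p lam n *v axis 1 1 =
     (\<Prod>k=1..n. 2 * lam * (if k = 1 then 1 else xt (k - 1) - x k - lam) / (xt k - x k - lam))
       *s W (xt n)" using Suc by simp
    have hk: "Suc n \<in> {2..N}" using Suc.prems False by simp
    have S: "Lmat x p lam (Suc n) *v W (xt n) =
     (2 * lam * (xt n - x (Suc n) - lam) / (xt (Suc n) - x (Suc n) - lam)) *s W (xt (Suc n))"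
      apply (rule step)
      using H hk by fastforce+
    show ?thesis using False
      by (simp only: Tmat.simps matrix_vector_mul_assoc[symmetric] IH mv_scale S vector_smult_assoc)
         (simp add: prod.nat_ivl_Suc' mult.commute)
  qed
qed

lemma prod_split:
  fixes A B :: "nat \<Rightarrow> complex" and c :: complex
  shows "(\<Prod>k=1..N. c * A k / B k) = c ^ N * (\<Prod>k=1..N. A k) / (\<Prod>k=1..N. B k)"
  by (simp add: prod.distrib prod_dividef)

theorem theorem15:
  fixes N :: nat and lam :: complex and x p xt :: "nat \<Rightarrow> complex"
  assumes "N \<ge> 2" and "lam \<noteq> 0"
  shows
   "((\<forall>k\<in>{1..N}. xt k - x k - lam \<noteq> 0 \<and>
        x k - (if k = 1 then xt N else xt (k - 1)) - lam \<noteq> 0 \<and>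
        exp (2 * p k) =
          (xt k - x k + lam) / (xt k - x k - lam) *
          ((x k - (if k = 1 then xt N else xt (k - 1)) + lam) /
           (x k - (if k = 1 then xt N else xt (k - 1)) - lam)))
     \<longrightarrow> is_eigenvalue (Tmat x p lam N)
           ((2 * lam) ^ N *
            (\<Prod>k=1..N. xt k - (if k = N then x 1 else x (k + 1)) - lam) /
            (\<Prod>k=1..N. xt k - x k - lam)))
    \<and>
    ((xt 1 - x 1 - lam \<noteq> 0 \<and>
      exp (2 * p 1) = (xt 1 - x 1 + lam) / (xt 1 - x 1 - lam) \<and>
      (\<forall>k\<in>{2..N}. xt k - x k - lam \<noteq> 0 \<and> x k - xt (k - 1) - lam \<noteq> 0 \<and>
        exp (2 * p k) =
          (xt k - x k + lam) / (xt k - x k - lam) *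
          ((x k - xt (k - 1) + lam) / (x k - xt (k - 1) - lam))))
     \<longrightarrow> Tmat x p lam N $ 2 $ 1 =
           (2 * lam) ^ N *
            (\<Prod>k=1..N-1. xt k - x (k + 1) - lam) /
            (\<Prod>k=1..N. xt k - x k - lam))"
proof (intro conjI impI)
  obtain M where M: "N = Suc M" and M1: "M \<ge> 1" using assms(1) by (cases N) auto
  assume H: "\<forall>k\<in>{1..N}. xt k - x k - lam \<noteq> 0 \<and>
        x k - (if k = 1 then xt N else xt (k - 1)) - lam \<noteq> 0 \<and>
        exp (2 * p k) =
          (xt k - x k + lam) / (xt k - x k - lam) *
          ((x k - (if k = 1 then xt N else xt (k - 1)) + lam) /
           (x k - (if k = 1 then xt N else xt (k - 1)) - lam))"
  have T: "Tmat x p lam N *v W (xt N) =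
     (\<Prod>k=1..N. 2 * lam * ((if k = 1 then xt N else xt (k - 1)) - x k - lam) / (xt k - x k - lam))
       *s W (xt N)"
    using partA[OF H, of N] assms(1) by simp
  have L: "(\<Prod>k=1..N. (if k = 1 then xt N else xt (k - 1)) - x k - lam)
     = (xt N - x 1 - lam) * (\<Prod>k=1..M. xt k - x (Suc k) - lam)"
  proof -
    let ?f = "\<lambda>k. (if k = 1 then xt N else xt (k - 1)) - x k - lam"
    have "prod ?f {1..Suc M} = ?f 1 * prod ?f {Suc 1..Suc M}"
      by (rule prod.atLeast_Suc_atMost) simp
    also have "prod ?f {Suc 1..Suc M} = prod (\<lambda>k. ?f (Suc k)) {1..M}"
      by (rule prod.shift_bounds_cl_Suc_ivl)
    finally show ?thesis unfolding M by simp
  qed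
  have R: "(\<Prod>k=1..N. xt k - (if k = N then x 1 else x (k + 1)) - lam)
     = (xt N - x 1 - lam) * (\<Prod>k=1..M. xt k - x (Suc k) - lam)"
  proof -
    have "(\<Prod>k=1..M. xt k - (if k = Suc M then x 1 else x (k + 1)) - lam)
        = (\<Prod>k=1..M. xt k - x (Suc k) - lam)"
      by (rule prod.cong) auto
    then show ?thesis unfolding M by (simp add: prod.nat_ivl_Suc')
  qed
  show "is_eigenvalue (Tmat x p lam N)
           ((2 * lam) ^ N *
            (\<Prod>k=1..N. xt k - (if k = N then x 1 else x (k + 1)) - lam) /
            (\<Prod>k=1..N. xt k - x k - lam))"
    unfolding is_eigenvalue_def
    using T W_nz unfolding prod_split L R[symmetric] by blast
next
  obtain M where M: "N = Suc M" and M1: "M \<ge> 1" using assms(1) by (cases N) auto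
  assume H: "xt 1 - x 1 - lam \<noteq> 0 \<and>
      exp (2 * p 1) = (xt 1 - x 1 + lam) / (xt 1 - x 1 - lam) \<and>
      (\<forall>k\<in>{2..N}. xt k - x k - lam \<noteq> 0 \<and> x k - xt (k - 1) - lam \<noteq> 0 \<and>
        exp (2 * p k) =
          (xt k - x k + lam) / (xt k - x k - lam) *
          ((x k - xt (k - 1) + lam) / (x k - xt (k - 1) - lam)))"
  have T: "Tmat x p lam N *v axis 1 1 =
     (\<Prod>k=1..N. 2 * lam * (if k = 1 then 1 else xt (k - 1) - x k - lam) / (xt k - x k - lam))
       *s W (xt N)"
    using partB[of xt x lam p N N] H assms(1) by simp
  have e: "(Tmat x p lam N *v axis 1 1) $ 2 = Tmat x p lam N $ 2 $ 1"
    by (simp add: matrix_vector_mult_def axis_def sum_2)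
  have L: "(\<Prod>k=1..N. (if k = 1 then 1 else xt (k - 1) - x k - lam))
     = (\<Prod>k=1..N-1. xt k - x (k + 1) - lam)"
  proof -
    let ?f = "\<lambda>k. (if k = 1 then 1 else xt (k - 1) - x k - lam)"
    have "prod ?f {1..Suc M} = ?f 1 * prod ?f {Suc 1..Suc M}"
      by (rule prod.atLeast_Suc_atMost) simp
    also have "prod ?f {Suc 1..Suc M} = prod (\<lambda>k. ?f (Suc k)) {1..M}"
      by (rule prod.shift_bounds_cl_Suc_ivl)
    finally show ?thesis unfolding M by simp
  qed
  show "Tmat x p lam N $ 2 $ 1 =
           (2 * lam) ^ N *
            (\<Prod>k=1..N-1. xt k - x (k + 1) - lam) /
            (\<Prod>k=1..N. xt k - x k - lam)"
    using arg_cong[OF T, of "\<lambda>v. v $ 2"] unfolding e prod_split L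
    by (simp add: W_def)
qed
end
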